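(* The variety $\mathbf N$ is generated by the semirings $S_c(a_1\cdots a_k)$, $k\geq 1$; that is, $\mathbf N=\mathsf V(\{S_c(a_1\cdots a_k)\mid k\ge1\})$.
   Context: $S_7$ is the ai-semiring on $\{\infty,a,1\}$ with $x+x=x$, $x+y=\infty$ for $x\neq y$, and commutative multiplication with $\infty$ a zero, $a\cdot a=\infty$, $a\cdot 1=a$, $1\cdot1=1$. $\mathbf N$ is the subvariety of $\mathsf V(S_7)$ defined by the identity $x^2y\approx x^2$. For $k\ge1$, $S_c(a_1\cdots a_k)$ is the flat semiring whose elements are $\infty$ together with all nonempty subwords of $a_1\cdots a_k$ in the free commutative semigroup; the product of two such words is their product if it is again such a subword and $\infty$ otherwise; $\infty$ is a multiplicative zero; $x+x=x$ and $x+y=\infty$ for $x\neq y$. *)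

theory Defs
  imports Main "HOL-Library.Multiset"
begin

datatype trm = Var nat | Plus trm trm | Times trm trm

fun eval :: "('a \<Rightarrow> 'a \<Rightarrow> 'a) \<Rightarrow> ('a \<Rightarrow> 'a \<Rightarrow> 'a) \<Rightarrow> (nat \<Rightarrow> 'a) \<Rightarrow> trm \<Rightarrow> 'a" where
  "eval ad mu v (Var n) = v n"
| "eval ad mu v (Plus s t) = ad (eval ad mu v s) (eval ad mu v t)"
| "eval ad mu v (Times s t) = mu (eval ad mu v s) (eval ad mu v t)"

definition holds :: "'a set \<Rightarrow> ('a \<Rightarrow> 'a \<Rightarrow> 'a) \<Rightarrow> ('a \<Rightarrow> 'a \<Rightarrow> 'a) \<Rightarrow> trm \<Rightarrow> trm \<Rightarrow> bool" where
  "holds S ad mu s t \<longleftrightarrow> (\<forall>v. (\<forall>n. v n \<in> S) \<longrightarrow> eval ad mu v s = eval ad mu v t)"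

datatype s7 = Inf7 | A7 | One7

definition add7 :: "s7 \<Rightarrow> s7 \<Rightarrow> s7" where
  "add7 x y = (if x = y then x else Inf7)"

fun mul7 :: "s7 \<Rightarrow> s7 \<Rightarrow> s7" where
  "mul7 One7 One7 = One7"
| "mul7 One7 A7 = A7"
| "mul7 A7 One7 = A7"
| "mul7 _ _ = Inf7"

text \<open>The flat semiring S_c(a_1...a_k): None is infinity, Some w is a nonempty subword w of
  a_1...a_k in the free commutative semigroup on letters 1..k (words as multisets of letters).\<close>
definition Sc_carrier :: "nat \<Rightarrow> nat multiset option set" where
  "Sc_carrier k = insert None (Some ` {w. w \<noteq> {#} \<and> w \<subseteq># mset_set {1..k}})"

definition Sc_add :: "nat multiset option \<Rightarrow> nat multiset option \<Rightarrow> nat multiset option" where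
  "Sc_add x y = (if x = y then x else None)"

definition Sc_mul :: "nat \<Rightarrow> nat multiset option \<Rightarrow> nat multiset option \<Rightarrow> nat multiset option" where
  "Sc_mul k x y = (case (x, y) of
      (Some u, Some w) \<Rightarrow> (if u + w \<subseteq># mset_set {1..k} then Some (u + w) else None)
    | _ \<Rightarrow> None)"

definition in_N :: "('a \<Rightarrow> 'a \<Rightarrow> 'a) \<Rightarrow> ('a \<Rightarrow> 'a \<Rightarrow> 'a) \<Rightarrow> bool" where
  "in_N ad mu \<longleftrightarrow>
     (\<forall>s t. holds UNIV add7 mul7 s t \<longrightarrow> holds UNIV ad mu s t) \<and>
     holds UNIV ad mu (Times (Times (Var 0) (Var 0)) (Var 1)) (Times (Var 0) (Var 0))"

definition in_V_Sc :: "('a \<Rightarrow> 'a \<Rightarrow> 'a) \<Rightarrow> ('a \<Rightarrow> 'a \<Rightarrow> 'a) \<Rightarrow> bool" where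
  "in_V_Sc ad mu \<longleftrightarrow>
     (\<forall>s t. (\<forall>k\<ge>1. holds (Sc_carrier k) Sc_add (Sc_mul k) s t) \<longrightarrow> holds UNIV ad mu s t)"

end

theory Submission
  imports Defs
begin


fun mons :: "trm \<Rightarrow> nat multiset set" where
  "mons (Var n) = {{#n#}}"
| "mons (Plus s t) = mons s \<union> mons t"
| "mons (Times s t) = {p + q | p q. p \<in> mons s \<and> q \<in> mons t}"

lemma mons_ne: "mons t \<noteq> {}"
  by (induction t) auto

lemma mons_elem_ne: "m \<in> mons t \<Longrightarrow> m \<noteq> {#}"
  by (induction t arbitrary: m) auto

lemma mons_finite: "finite (mons t)"
proof (induction t)
  case (Times s t)
  have "{p + q | p q. p \<in> mons s \<and> q \<in> mons t} = (\<lambda>(p,q). p + q) ` (mons s \<times> mons t)"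
    by auto
  then show ?case using Times by simp
qed auto

definition DM :: "nat multiset set \<Rightarrow> nat set" where
  "DM M = (\<Union>m\<in>M. set_mset m)"

definition trv :: "nat multiset set \<Rightarrow> nat set \<Rightarrow> bool" where
  "trv M X \<longleftrightarrow> (\<forall>m\<in>M. size (filter_mset (\<lambda>x. x \<in> X) m) = 1)"

definition Wof :: "(nat \<Rightarrow> nat multiset option) \<Rightarrow> nat \<Rightarrow> nat multiset" where
  "Wof w x = (case w x of None \<Rightarrow> {#} | Some a \<Rightarrow> a)"

definition validw :: "nat \<Rightarrow> (nat \<Rightarrow> nat multiset option) \<Rightarrow> bool" where
  "validw k w \<longleftrightarrow> (\<forall>n. case w n of None \<Rightarrow> True | Some a \<Rightarrow> a \<subseteq># mset_set {1..k})"

definition mv :: "nat \<Rightarrow> (nat \<Rightarrow> nat multiset option) \<Rightarrow> nat multiset \<Rightarrow> nat multiset option" where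
  "mv k w m = (if \<forall>x\<in>#m. w x \<noteq> None then
      (if sum_mset (image_mset (Wof w) m) \<subseteq># mset_set {1..k}
       then Some (sum_mset (image_mset (Wof w) m)) else None) else None)"

abbreviation ev :: "nat \<Rightarrow> (nat \<Rightarrow> nat multiset option) \<Rightarrow> trm \<Rightarrow> nat multiset option" where
  "ev k w t \<equiv> eval Sc_add (Sc_mul k) w t"

lemma Wof_sub: "validw k w \<Longrightarrow> Wof w x \<subseteq># mset_set {1..k}"
  unfolding validw_def Wof_def by (cases "w x") (auto dest: spec[of _ x])

lemma mv_single: "validw k w \<Longrightarrow> mv k w {#n#} = w n"
  unfolding mv_def validw_def Wof_def by (cases "w n") (auto dest: spec[of _ n])

lemma mv_add: "mv k w (p + q) = Sc_mul k (mv k w p) (mv k w q)"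
proof (cases "(\<forall>x\<in>#p. w x \<noteq> None) \<and> (\<forall>x\<in>#q. w x \<noteq> None)")
  case True
  let ?Sp = "sum_mset (image_mset (Wof w) p)"
  let ?Sq = "sum_mset (image_mset (Wof w) q)"
  let ?C = "mset_set {1..k}"
  show ?thesis
  proof (cases "?Sp + ?Sq \<subseteq># ?C")
    case T2: True
    have "?Sp \<subseteq># ?C" using T2 by (meson mset_subset_eq_add_left subset_mset.order_trans)
    moreover have "?Sq \<subseteq># ?C" using T2 by (meson mset_subset_eq_add_right subset_mset.order_trans)
    ultimately show ?thesis using True T2 unfolding mv_def Sc_mul_def by auto
  next
    case False
    then show ?thesis using True unfolding mv_def Sc_mul_def by auto
  qed
next
  case False
  then show ?thesis unfolding mv_def Sc_mul_def by auto
qed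

lemma Sc_mul_Some: "Sc_mul k a b = Some c \<longleftrightarrow>
   (\<exists>u v. a = Some u \<and> b = Some v \<and> u + v \<subseteq># mset_set {1..k} \<and> c = u + v)"
  by (auto simp: Sc_mul_def split: option.splits)

lemma evM: "validw k w \<Longrightarrow> ev k w t = Some c \<longleftrightarrow> (\<forall>m\<in>mons t. mv k w m = Some c)"
proof (induction t arbitrary: c)
  case (Var n) then show ?case by (simp add: mv_single)
next
  case (Plus s t)
  have "ev k w (Plus s t) = Some c \<longleftrightarrow> ev k w s = Some c \<and> ev k w t = Some c"
    by (auto simp: Sc_add_def)
  then show ?case using Plus.IH[OF Plus.prems] by auto
next
  case (Times s t)
  show ?case
  proof
    assume "ev k w (Times s t) = Some c"
    then obtain u v where uv: "ev k w s = Some u" "ev k w t = Some v"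
      "u + v \<subseteq># mset_set {1..k}" "c = u + v" using Sc_mul_Some by auto
    then show "\<forall>m\<in>mons (Times s t). mv k w m = Some c"
      using Times.IH[OF Times.prems] by (auto simp: mv_add Sc_mul_def)
  next
    assume H: "\<forall>m\<in>mons (Times s t). mv k w m = Some c"
    have Hpq: "Sc_mul k (mv k w p) (mv k w q) = Some c" if "p \<in> mons s" "q \<in> mons t" for p q
    proof -
      have "p + q \<in> mons (Times s t)" using that by auto
      then have "mv k w (p + q) = Some c" using H by blast
      then show ?thesis by (simp add: mv_add)
    qed
    obtain p0 where p0: "p0 \<in> mons s" using mons_ne by blast
    obtain q0 where q0: "q0 \<in> mons t" using mons_ne by blast
    obtain u v where u: "mv k w p0 = Some u" and v: "mv k w q0 = Some v"
      and uv: "u + v \<subseteq># mset_set {1..k}" "c = u + v"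
      using Hpq[OF p0 q0] Sc_mul_Some by blast
    have "\<forall>p\<in>mons s. mv k w p = Some u"
    proof
      fix p assume "p \<in> mons s"
      from Hpq[OF this q0] v obtain u' where "mv k w p = Some u'" "c = u' + v"
        using Sc_mul_Some by auto
      then show "mv k w p = Some u" using uv by simp
    qed
    then have es: "ev k w s = Some u" using Times.IH[OF Times.prems] by blast
    have "\<forall>q\<in>mons t. mv k w q = Some v"
    proof
      fix q assume "q \<in> mons t"
      from Hpq[OF p0 this] u obtain v' where "mv k w q = Some v'" "c = u + v'"
        using Sc_mul_Some by auto
      then show "mv k w q = Some v" using uv by simp
    qed
    then have et: "ev k w t = Some v" using Times.IH[OF Times.prems] by blast
    show "ev k w (Times s t) = Some c" using es et uv by (simp add: Sc_mul_def)
  qed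
qed



definition UU :: "(nat \<Rightarrow> nat multiset option) \<Rightarrow> nat multiset set \<Rightarrow> nat set" where
  "UU w M = {p. \<exists>x\<in>DM M. p \<in># Wof w x}"

lemma count_le1: "A \<subseteq># mset_set {1..k} \<Longrightarrow> count A p \<le> 1"
proof -
  assume "A \<subseteq># mset_set {1..k}"
  then have "count A p \<le> count (mset_set {1..k}) p" by (simp add: subseteq_mset_def)
  also have "\<dots> \<le> 1" by (simp add: count_mset_set')
  finally show ?thesis .
qed

lemma count_sum:
  assumes "\<And>x. count (W x) p \<le> 1"
  shows "count (sum_mset (image_mset W m)) p = size (filter_mset (\<lambda>x. p \<in># W x) m)"
proof (induction m)
  case empty then show ?case by simp
next
  case (add x m)
  have "count (W x) p = (if p \<in># W x then 1 else 0)"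
  proof (cases "p \<in># W x")
    case True
    then have "count (W x) p > 0" by simp
    then have "count (W x) p = 1" using assms[of x] by linarith
    then show ?thesis using True by simp
  qed (simp add: not_in_iff)
  then show ?case using add by simp
qed

lemma mset_set_sub: "finite A \<Longrightarrow> A \<subseteq> B \<Longrightarrow> finite B \<Longrightarrow> mset_set A \<subseteq># mset_set B"
  by (auto simp: subseteq_mset_def count_mset_set')

lemma size_filter_pos: "size (filter_mset P m) = 0 \<longleftrightarrow> (\<forall>x\<in>#m. \<not> P x)"
  by (simp add: filter_mset_eq_conv)

lemma charM:
  assumes vw: "validw k w" and ne: "M \<noteq> {}"
  shows "(\<forall>m\<in>M. mv k w m = Some c) \<longleftrightarrow>
    (\<forall>x\<in>DM M. w x \<noteq> None) \<and> c = mset_set (UU w M) \<and> (\<forall>p\<in>UU w M. trv M {x. p \<in># Wof w x})"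
proof -
  have c1: "count (Wof w x) p \<le> 1" for x p using Wof_sub[OF vw] count_le1 by blast
  have cs: "count (sum_mset (image_mset (Wof w) m)) p = size (filter_mset (\<lambda>x. p \<in># Wof w x) m)" for m p
    using count_sum[of "Wof w" p m] c1 by blast
  have UUsub: "UU w M \<subseteq> {1..k}"
  proof
    fix p assume "p \<in> UU w M"
    then obtain x where "p \<in># Wof w x" unfolding UU_def by blast
    then show "p \<in> {1..k}" using Wof_sub[OF vw, of x] by (metis mset_subset_eqD finite_atLeastAtMost finite_set_mset_mset_set)
  qed
  have finU: "finite (UU w M)" using UUsub finite_subset by blast
  have mU: "mset_set (UU w M) \<subseteq># mset_set {1..k}" using mset_set_sub[OF finU UUsub] by simp
  have cU: "count (mset_set (UU w M)) p = (if p \<in> UU w M then 1 else 0)" for p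
    using finU by (simp add: count_mset_set')
  obtain m0 where m0: "m0 \<in> M" using ne by blast
  show ?thesis
  proof
    assume A: "\<forall>m\<in>M. mv k w m = Some c"
    have A1: "(\<forall>x\<in>#m. w x \<noteq> None) \<and> sum_mset (image_mset (Wof w) m) = c \<and> c \<subseteq># mset_set {1..k}"
      if "m \<in> M" for m
    proof -
      have "mv k w m = Some c" using A that by blast
      then show ?thesis unfolding mv_def by (auto split: if_splits)
    qed
    have P1: "\<forall>x\<in>DM M. w x \<noteq> None" using A1 unfolding DM_def by blast
    have cc: "count c p = size (filter_mset (\<lambda>x. p \<in># Wof w x) m)" if "m \<in> M" for m p
      using A1[OF that] cs by metis
    have cle: "count c p \<le> 1" for p using A1[OF m0] count_le1 by blast
    have cU1: "count c p = 1" if pU: "p \<in> UU w M" for p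
    proof -
      obtain x m1 where x: "m1 \<in> M" "x \<in># m1" "p \<in># Wof w x"
        using pU unfolding UU_def DM_def by blast
      have "size (filter_mset (\<lambda>x. p \<in># Wof w x) m1) \<noteq> 0"
        using x size_filter_pos[of "\<lambda>x. p \<in># Wof w x" m1] by auto
      then show ?thesis using cc[OF x(1), of p] cle[of p] by linarith
    qed
    have cU0: "count c p = 0" if "p \<notin> UU w M" for p
    proof -
      have "\<forall>x\<in>#m0. \<not> p \<in># Wof w x" using that m0 unfolding UU_def DM_def by blast
      then have "size (filter_mset (\<lambda>x. p \<in># Wof w x) m0) = 0" using size_filter_pos[of "\<lambda>x. p \<in># Wof w x" m0] by simp
      then show ?thesis using cc[OF m0] by simp
    qed
    have P2: "c = mset_set (UU w M)"
    proof (rule multiset_eqI)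
      fix p show "count c p = count (mset_set (UU w M)) p"
        using cU[of p] cU0[of p] cU1[of p] by (cases "p \<in> UU w M") simp_all
    qed
    have P3: "\<forall>p\<in>UU w M. trv M {x. p \<in># Wof w x}"
      unfolding trv_def
    proof (intro ballI)
      fix p m assume pU: "p \<in> UU w M" and mM: "m \<in> M"
      show "size (filter_mset (\<lambda>x. x \<in> {x. p \<in># Wof w x}) m) = 1"
        using cc[OF mM, of p] cU1[OF pU] by simp
    qed
    show "(\<forall>x\<in>DM M. w x \<noteq> None) \<and> c = mset_set (UU w M) \<and> (\<forall>p\<in>UU w M. trv M {x. p \<in># Wof w x})"
      using P1 P2 P3 by blast
  next
    assume B: "(\<forall>x\<in>DM M. w x \<noteq> None) \<and> c = mset_set (UU w M) \<and> (\<forall>p\<in>UU w M. trv M {x. p \<in># Wof w x})"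
    show "\<forall>m\<in>M. mv k w m = Some c"
    proof
      fix m assume m: "m \<in> M"
      have nn: "\<forall>x\<in>#m. w x \<noteq> None" using B m unfolding DM_def by blast
      have S: "sum_mset (image_mset (Wof w) m) = mset_set (UU w M)"
      proof (rule multiset_eqI)
        fix p
        show "count (sum_mset (image_mset (Wof w) m)) p = count (mset_set (UU w M)) p"
        proof (cases "p \<in> UU w M")
          case True
          then have "trv M {x. p \<in># Wof w x}" using B by blast
          then show ?thesis using m True cs cU unfolding trv_def by simp
        next
          case False
          then have "\<forall>x\<in>#m. \<not> p \<in># Wof w x" using m unfolding UU_def DM_def by blast
          then have "size (filter_mset (\<lambda>x. p \<in># Wof w x) m) = 0" using size_filter_pos[of "\<lambda>x. p \<in># Wof w x" m] by simp
          then show ?thesis using False cs cU by simp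
        qed
      qed
      show "mv k w m = Some c" unfolding mv_def using nn S mU B by simp
    qed
  qed
qed



lemma option_eqI: "(\<And>c. a = Some c \<longleftrightarrow> b = Some c) \<Longrightarrow> a = b"
  by (cases a; cases b) auto

lemma eqDT:
  assumes D: "DM (mons s) = DM (mons t)" and T: "\<And>X. trv (mons s) X \<longleftrightarrow> trv (mons t) X"
    and vw: "validw k w"
  shows "ev k w s = ev k w t"
proof (rule option_eqI)
  fix c
  show "ev k w s = Some c \<longleftrightarrow> ev k w t = Some c"
    by (simp only: evM[OF vw] charM[OF vw mons_ne] UU_def D T)
qed

fun f7 :: "s7 \<Rightarrow> nat multiset option" where
  "f7 Inf7 = None" | "f7 A7 = Some {#1#}" | "f7 One7 = Some {#}"

fun g7 :: "nat multiset option \<Rightarrow> s7" where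
  "g7 None = Inf7" | "g7 (Some m) = (if m = {#} then One7 else A7)"

definition V7 :: "nat multiset option set" where "V7 = {None, Some {#}, Some {#1#}}"

lemma f7_inj: "f7 x = f7 y \<Longrightarrow> x = y" by (cases x; cases y) auto
lemma f7_add: "f7 (add7 x y) = Sc_add (f7 x) (f7 y)"
  by (cases x; cases y) (auto simp: add7_def Sc_add_def)
lemma f7_mul: "f7 (mul7 x y) = Sc_mul 1 (f7 x) (f7 y)"
  by (cases x; cases y) (auto simp: Sc_mul_def)
lemma f7_eval: "f7 (eval add7 mul7 v t) = ev 1 (f7 \<circ> v) t"
  by (induction t) (simp_all add: f7_add f7_mul)
lemma f7g7: "x \<in> V7 \<Longrightarrow> f7 (g7 x) = x" by (auto simp: V7_def)
lemma f7V: "f7 x \<in> V7" by (cases x) (auto simp: V7_def)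

lemma holds7_iff: "holds UNIV add7 mul7 s t \<longleftrightarrow> (\<forall>w. (\<forall>n. w n \<in> V7) \<longrightarrow> ev 1 w s = ev 1 w t)"
proof
  assume H: "holds UNIV add7 mul7 s t"
  show "\<forall>w. (\<forall>n. w n \<in> V7) \<longrightarrow> ev 1 w s = ev 1 w t"
  proof (intro allI impI)
    fix w :: "nat \<Rightarrow> nat multiset option" assume w: "\<forall>n. w n \<in> V7"
    have ww: "w = f7 \<circ> (g7 \<circ> w)" using w f7g7 by auto
    have "eval add7 mul7 (g7 \<circ> w) s = eval add7 mul7 (g7 \<circ> w) t" using H unfolding holds_def by blast
    then show "ev 1 w s = ev 1 w t" using f7_eval ww by metis
  qed
next
  assume H: "\<forall>w. (\<forall>n. w n \<in> V7) \<longrightarrow> ev 1 w s = ev 1 w t"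
  show "holds UNIV add7 mul7 s t" unfolding holds_def
  proof (intro allI impI)
    fix v :: "nat \<Rightarrow> s7"
    have "ev 1 (f7 \<circ> v) s = ev 1 (f7 \<circ> v) t" using H f7V by simp
    then show "eval add7 mul7 v s = eval add7 mul7 v t" using f7_eval f7_inj by metis
  qed
qed

lemma V7_valid: "(\<forall>n. w n \<in> V7) \<Longrightarrow> validw 1 w"
  unfolding validw_def
proof (intro allI)
  fix n assume "\<forall>n. w n \<in> V7"
  then have "w n \<in> V7" by blast
  then show "case w n of None \<Rightarrow> True | Some a \<Rightarrow> a \<subseteq># mset_set {1..1}" by (auto simp: V7_def)
qed

lemma trv_meets: "trv M X \<Longrightarrow> M \<noteq> {} \<Longrightarrow> X \<inter> DM M \<noteq> {}"
proof -
  assume t: "trv M X" and ne: "M \<noteq> {}"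
  obtain m where m: "m \<in> M" using ne by blast
  then have "size (filter_mset (\<lambda>x. x \<in> X) m) \<noteq> 0" using t unfolding trv_def by simp
  then have "\<exists>x\<in>#m. x \<in> X" using size_filter_pos[of "\<lambda>x. x \<in> X" m] by auto
  then obtain x where "x \<in># m" "x \<in> X" by blast
  then show ?thesis using m unfolding DM_def by blast
qed

lemma D7: "ev 1 (\<lambda>n. if n = x then None else Some {#}) u \<noteq> None \<longleftrightarrow> x \<notin> DM (mons u)"
proof -
  let ?w = "\<lambda>n. if n = x then None else Some ({#}::nat multiset)"
  have vw: "validw 1 ?w" by (simp add: validw_def)
  have U: "UU ?w M = {}" for M by (simp add: UU_def Wof_def)
  have "ev 1 ?w u = Some c \<longleftrightarrow> x \<notin> DM (mons u) \<and> c = {#}" for c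
    unfolding evM[OF vw] charM[OF vw mons_ne] U by auto
  then show ?thesis by (cases "ev 1 ?w u") auto
qed

lemma T7: "ev 1 (\<lambda>n. if n \<in> X then Some {#1#} else Some {#}) u = Some {#1#} \<longleftrightarrow> trv (mons u) X"
proof -
  let ?w = "\<lambda>n. if n \<in> X then Some {#1::nat#} else Some {#}"
  have vw: "validw 1 ?w" by (simp add: validw_def)
  have W: "Wof ?w y = (if y \<in> X then {#1#} else {#})" for y by (simp add: Wof_def)
  have P1: "{y. 1 \<in># Wof ?w y} = X" using W by auto
  show ?thesis
  proof (cases "X \<inter> DM (mons u) = {}")
    case True
    have U: "UU ?w (mons u) = {}" using True W unfolding UU_def by auto
    have "\<not> trv (mons u) X" using trv_meets mons_ne True by blast
    then show ?thesis unfolding evM[OF vw] charM[OF vw mons_ne] U by simp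
  next
    case False
    have U: "UU ?w (mons u) = {1}" using False W unfolding UU_def by auto
    show ?thesis unfolding evM[OF vw] charM[OF vw mons_ne] U using P1 by simp
  qed
qed

lemma holds7_D_trv:
  assumes H: "\<forall>w. (\<forall>n. w n \<in> V7) \<longrightarrow> ev 1 w s = ev 1 w t"
  shows "DM (mons s) = DM (mons t)" "trv (mons s) X \<longleftrightarrow> trv (mons t) X"
proof -
  have "x \<in> DM (mons s) \<longleftrightarrow> x \<in> DM (mons t)" for x
  proof -
    have "ev 1 (\<lambda>n. if n = x then None else Some {#}) s = ev 1 (\<lambda>n. if n = x then None else Some {#}) t"
      using H by (simp add: V7_def)
    then show ?thesis using D7[of x s] D7[of x t] by metis
  qed
  then show "DM (mons s) = DM (mons t)" by blast
  have "ev 1 (\<lambda>n. if n \<in> X then Some {#1#} else Some {#}) s = ev 1 (\<lambda>n. if n \<in> X then Some {#1#} else Some {#}) t"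
    using H by (simp add: V7_def)
  then show "trv (mons s) X \<longleftrightarrow> trv (mons t) X" using T7[of X s] T7[of X t] by metis
qed



lemma DM_Plus: "DM (mons (Plus s t)) = DM (mons s) \<union> DM (mons t)"
  by (auto simp: DM_def)

lemma DM_Times: "DM (mons (Times s t)) = DM (mons s) \<union> DM (mons t)"
proof
  show "DM (mons (Times s t)) \<subseteq> DM (mons s) \<union> DM (mons t)" by (auto simp: DM_def)
next
  obtain p0 where p0: "p0 \<in> mons s" using mons_ne by blast
  obtain q0 where q0: "q0 \<in> mons t" using mons_ne by blast
  show "DM (mons s) \<union> DM (mons t) \<subseteq> DM (mons (Times s t))"
  proof
    fix x assume "x \<in> DM (mons s) \<union> DM (mons t)"
    then show "x \<in> DM (mons (Times s t))"
    proof
      assume "x \<in> DM (mons s)"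
      then obtain p where "p \<in> mons s" "x \<in># p" by (auto simp: DM_def)
      then have "p + q0 \<in> mons (Times s t)" "x \<in># p + q0" using q0 by auto
      then show ?thesis unfolding DM_def by blast
    next
      assume "x \<in> DM (mons t)"
      then obtain q where "q \<in> mons t" "x \<in># q" by (auto simp: DM_def)
      then have "p0 + q \<in> mons (Times s t)" "x \<in># p0 + q" using p0 by auto
      then show ?thesis unfolding DM_def by blast
    qed
  qed
qed

lemma DM_Var: "DM (mons (Var n)) = {n}" by (simp add: DM_def)

lemma eval_cong: "(\<forall>x\<in>DM (mons u). w x = w' x) \<Longrightarrow> eval ad mu w u = eval ad mu w' u"
proof (induction u)
  case (Var n) then show ?case by (simp add: DM_def)
next
  case (Plus u1 u2)
  have "\<forall>x\<in>DM (mons u1). w x = w' x" "\<forall>x\<in>DM (mons u2). w x = w' x"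
    using Plus.prems unfolding DM_Plus by blast+
  then show ?case using Plus.IH by simp
next
  case (Times u1 u2)
  have "\<forall>x\<in>DM (mons u1). w x = w' x" "\<forall>x\<in>DM (mons u2). w x = w' x"
    using Times.prems unfolding DM_Times by blast+
  then show ?case using Times.IH by simp
qed

lemma DM_finite: "finite (DM (mons u))"
  unfolding DM_def using mons_finite by simp

lemma trv_inter: "trv M X \<longleftrightarrow> trv M (X \<inter> DM M)"
proof -
  have "filter_mset (\<lambda>x. x \<in> X) m = filter_mset (\<lambda>x. x \<in> X \<inter> DM M) m" if "m \<in> M" for m
    using that by (intro filter_mset_cong) (auto simp: DM_def)
  then show ?thesis unfolding trv_def by simp
qed

lemma carrier_valid: "(\<forall>n. w n \<in> Sc_carrier k) \<Longrightarrow> validw k w"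
  unfolding validw_def
proof (intro allI)
  fix n assume "\<forall>n. w n \<in> Sc_carrier k"
  then have "w n \<in> Sc_carrier k" by blast
  then show "case w n of None \<Rightarrow> True | Some a \<Rightarrow> a \<subseteq># mset_set {1..k}" by (auto simp: Sc_carrier_def)
qed

definition good :: "trm \<Rightarrow> bool" where
  "good u \<longleftrightarrow> (\<forall>x\<in>DM (mons u). \<exists>X. trv (mons u) X \<and> x \<in> X)"

lemma good_transfer:
  assumes g: "good s" and E: "\<forall>k\<ge>1. holds (Sc_carrier k) Sc_add (Sc_mul k) s t"
  shows "DM (mons t) = DM (mons s) \<and> (\<forall>X. trv (mons s) X \<longrightarrow> trv (mons t) X)"
proof -
  let ?M = "mons s"
  let ?D = "DM (mons s)"
  define T where "T = {X. X \<subseteq> ?D \<and> trv ?M X}"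
  have finT: "finite T" unfolding T_def using DM_finite[of s] by (simp add: finite_subset)
  obtain L where L: "set L = T" using finite_list[OF finT] by blast
  define r where "r = length L"
  have cover: "\<exists>j<r. x \<in> L ! j" if "x \<in> ?D" for x
  proof -
    have "\<exists>X. trv ?M X \<and> x \<in> X" using g that unfolding good_def by (rule bspec)
    then obtain X where X: "trv ?M X" "x \<in> X" by blast
    have "X \<inter> ?D \<in> T" unfolding T_def using X trv_inter by blast
    then obtain j where "j < r" "L ! j = X \<inter> ?D" using L unfolding r_def by (metis in_set_conv_nth)
    then show ?thesis using X that by blast
  qed
  obtain m0 where m0: "m0 \<in> ?M" using mons_ne by blast
  then obtain x0 where x0: "x0 \<in># m0" using mons_elem_ne by (metis multiset_nonemptyE)
  have x0D: "x0 \<in> ?D" using m0 x0 unfolding DM_def by blast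
  have r1: "r \<ge> 1" using cover[OF x0D] by auto
  define I where "I x = {i \<in> {1..r}. x \<in> L ! (i - 1)}" for x
  define w where "w x = (if x \<in> ?D then Some (mset_set (I x)) else None)" for x
  have Isub: "I x \<subseteq> {1..r}" for x unfolding I_def by blast
  have finI: "finite (I x)" for x using Isub finite_subset by blast
  have Ine: "I x \<noteq> {}" if xD: "x \<in> ?D" for x
  proof -
    obtain j where "j < r" "x \<in> L ! j" using cover[OF xD] by blast
    then have "j + 1 \<in> I x" unfolding I_def by auto
    then show ?thesis by blast
  qed
  have carrier: "\<forall>n. w n \<in> Sc_carrier r"
  proof
    fix n show "w n \<in> Sc_carrier r"
    proof (cases "n \<in> ?D")
      case True
      have "mset_set (I n) \<noteq> {#}" using Ine[OF True] finI[of n] by (simp add: mset_set_empty_iff)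
      moreover have "mset_set (I n) \<subseteq># mset_set {1..r}" using mset_set_sub[OF finI Isub] by simp
      ultimately show ?thesis using True unfolding w_def Sc_carrier_def by auto
    qed (simp add: w_def Sc_carrier_def)
  qed
  have vw: "validw r w" using carrier_valid[OF carrier] .
  have Wof_w: "Wof w x = (if x \<in> ?D then mset_set (I x) else {#})" for x
    unfolding Wof_def w_def by simp
  have memW: "p \<in># Wof w x \<longleftrightarrow> x \<in> ?D \<and> p \<in> I x" for p x
    using Wof_w finI by simp
  have LT: "L ! j \<in> T" if "j < r" for j using that L unfolding r_def by (metis nth_mem)
  have Pp: "{x. p \<in># Wof w x} = L ! (p - 1)" if "p \<in> {1..r}" for p
  proof -
    have "p - 1 < r" using that by auto
    then have "L ! (p - 1) \<in> T" by (rule LT)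
    then have "L ! (p - 1) \<subseteq> ?D" unfolding T_def by simp
    then show ?thesis using that memW unfolding I_def by auto
  qed
  have UUsub: "UU w N \<subseteq> {1..r}" for N unfolding UU_def using memW Isub by blast
  have UUs: "UU w ?M = {1..r}"
  proof
    show "{1..r} \<subseteq> UU w ?M"
    proof
      fix p assume p: "p \<in> {1..r}"
      have "trv ?M (L ! (p - 1))" using LT[of "p - 1"] p unfolding T_def by auto
      then obtain x where "x \<in> L ! (p - 1)" "x \<in> ?D" using trv_meets mons_ne by blast
      then have "p \<in># Wof w x" using Pp[OF p] by blast
      then show "p \<in> UU w ?M" using \<open>x \<in> ?D\<close> unfolding UU_def by blast
    qed
  qed (rule UUsub)
  have evs: "ev r w s = Some (mset_set {1..r})"
    unfolding evM[OF vw] charM[OF vw mons_ne] UUs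
  proof (intro conjI)
    show "\<forall>x\<in>?D. w x \<noteq> None" unfolding w_def by simp
    show "\<forall>p\<in>{1..r}. trv ?M {x. p \<in># Wof w x}"
      using Pp LT unfolding T_def by auto
  qed simp
  have Ew: "ev r w s = ev r w t" if "\<forall>n. w n \<in> Sc_carrier r" for w
    using E r1 that unfolding holds_def by blast
  have evt: "ev r w t = Some (mset_set {1..r})" using evs Ew[OF carrier] by simp
  then have ct: "(\<forall>x\<in>DM (mons t). w x \<noteq> None) \<and> mset_set {1..r} = mset_set (UU w (mons t))
      \<and> (\<forall>p\<in>UU w (mons t). trv (mons t) {x. p \<in># Wof w x})"
    using evM[OF vw] charM[OF vw mons_ne] by blast
  have Dts: "DM (mons t) \<subseteq> ?D" using ct unfolding w_def by (auto split: if_splits)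
  have UUt: "UU w (mons t) = {1..r}"
  proof -
    have "finite (UU w (mons t))" using UUsub finite_subset by blast
    then show ?thesis using ct by (metis finite_atLeastAtMost finite_set_mset_mset_set)
  qed
  have trt: "trv (mons t) (L ! (p - 1))" if pr: "p \<in> {1..r}" for p
  proof -
    have "p \<in> UU w (mons t)" using UUt pr by simp
    then have "trv (mons t) {x. p \<in># Wof w x}" using ct by blast
    then show ?thesis using Pp[OF pr] by simp
  qed
  have Dst: "?D \<subseteq> DM (mons t)"
  proof
    fix x assume xD: "x \<in> ?D"
    show "x \<in> DM (mons t)"
    proof (rule ccontr)
      assume nx: "x \<notin> DM (mons t)"
      define w' where "w' = w(x := None)"
      have c': "\<forall>n. w' n \<in> Sc_carrier r" using carrier unfolding w'_def by (simp add: Sc_carrier_def)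
      have vw': "validw r w'" using carrier_valid[OF c'] .
      have "ev r w' t = ev r w t" using nx unfolding w'_def by (intro eval_cong) auto
      then have "ev r w' s = Some (mset_set {1..r})" using evt Ew[OF c'] by simp
      then have "\<forall>y\<in>?D. w' y \<noteq> None" using evM[OF vw'] charM[OF vw' mons_ne] by blast
      then have "w' x \<noteq> None" using xD by blast
      then show False unfolding w'_def by simp
    qed
  qed
  have "trv (mons t) X" if "trv ?M X" for X
  proof -
    have "X \<inter> ?D \<in> T" unfolding T_def using that trv_inter by blast
    then obtain j where j: "j < r" "L ! j = X \<inter> ?D" using L unfolding r_def by (metis in_set_conv_nth)
    then have "trv (mons t) (X \<inter> ?D)" using trt[of "j + 1"] by auto
    then show ?thesis using trv_inter Dts Dst by (metis subset_antisym)
  qed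
  then show ?thesis using Dts Dst by blast
qed

lemma good_transfer2:
  assumes g: "good s" and E: "\<forall>k\<ge>1. holds (Sc_carrier k) Sc_add (Sc_mul k) s t"
  shows "good t"
  unfolding good_def
proof
  fix x assume "x \<in> DM (mons t)"
  then have xs: "x \<in> DM (mons s)" using good_transfer[OF g E] by simp
  have "\<exists>X. trv (mons s) X \<and> x \<in> X" using g[unfolded good_def] xs by (rule bspec)
  then show "\<exists>X. trv (mons t) X \<and> x \<in> X" using good_transfer[OF g E] by blast
qed



lemma mul7_comm: "mul7 x y = mul7 y x" by (cases x; cases y) auto

lemma sq_none: "x \<in> Sc_carrier k \<Longrightarrow> Sc_mul k x x = None"
proof -
  assume "x \<in> Sc_carrier k"
  then consider "x = None" | u where "x = Some u" "u \<noteq> {#}" unfolding Sc_carrier_def by blast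
  then show ?thesis
  proof cases
    case 1 then show ?thesis by (simp add: Sc_mul_def)
  next
    case 2
    obtain a where a: "a \<in># u" using 2 by (metis multiset_nonemptyE)
    have "\<not> u + u \<subseteq># mset_set {1..k}"
    proof
      assume "u + u \<subseteq># mset_set {1..k}"
      then have "count (u + u) a \<le> 1" using count_le1 by blast
      moreover have "count u a \<ge> 1" using a by (simp add: Suc_le_eq)
      ultimately show False by simp
    qed
    then show ?thesis using 2 by (simp add: Sc_mul_def)
  qed
qed

theorem lemma4p5:
  fixes ad mu :: "'a \<Rightarrow> 'a \<Rightarrow> 'a"
  shows "in_N ad mu \<longleftrightarrow> in_V_Sc ad mu"
proof
  assume N: "in_N ad mu"
  have S7: "holds UNIV ad mu s t" if "holds UNIV add7 mul7 s t" for s t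
    using N that unfolding in_N_def by blast
  have X2: "mu (mu a a) b = mu a a" for a b
  proof -
    have "holds UNIV ad mu (Times (Times (Var 0) (Var 0)) (Var 1)) (Times (Var 0) (Var 0))"
      using N unfolding in_N_def by blast
    then have "eval ad mu (\<lambda>n. if n = 0 then a else b) (Times (Times (Var 0) (Var 0)) (Var 1))
       = eval ad mu (\<lambda>n. if n = 0 then a else b) (Times (Var 0) (Var 0))"
      unfolding holds_def by blast
    then show ?thesis by simp
  qed
  have comm7: "holds UNIV add7 mul7 (Times (Var 0) (Var 1)) (Times (Var 1) (Var 0))"
    unfolding holds_def by (simp add: mul7_comm)
  have C: "mu a b = mu b a" for a b
  proof -
    have "eval ad mu (\<lambda>n. if n = 0 then a else b) (Times (Var 0) (Var 1))
       = eval ad mu (\<lambda>n. if n = 0 then a else b) (Times (Var 1) (Var 0))"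
      using S7[OF comm7] unfolding holds_def by blast
    then show ?thesis by simp
  qed
  have K: "mu a a = mu b b" for a b
    using X2[of a "mu b b"] X2[of b "mu a a"] C[of "mu a a" "mu b b"] by simp
  have bad_eval: "\<exists>y. \<forall>v. eval ad mu v u = mu (v y) (v y)" if nb: "\<not> good u" for u
  proof -
    obtain y where y: "y \<in> DM (mons u)" "\<forall>X. trv (mons u) X \<longrightarrow> y \<notin> X"
      using nb unfolding good_def by auto
    let ?u' = "Times (Times (Var y) (Var y)) u"
    have D: "DM (mons u) = DM (mons ?u')" using y(1) unfolding DM_Times DM_Var by blast
    have T: "trv (mons u) X \<longleftrightarrow> trv (mons ?u') X" for X
    proof
      assume tX: "trv (mons u) X"
      then have yX: "y \<notin> X" using y by blast
      show "trv (mons ?u') X" unfolding trv_def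
      proof
        fix m assume "m \<in> mons ?u'"
        then obtain q where q: "q \<in> mons u" "m = {#y, y#} + q" by auto
        then show "size (filter_mset (\<lambda>x. x \<in> X) m) = 1" using tX yX unfolding trv_def by simp
      qed
    next
      assume tX: "trv (mons ?u') X"
      obtain q0 where q0: "q0 \<in> mons u" using mons_ne by blast
      have "{#y, y#} + q0 \<in> mons ?u'" using q0 by auto
      then have "size (filter_mset (\<lambda>x. x \<in> X) ({#y, y#} + q0)) = 1" using tX unfolding trv_def by blast
      then have yX: "y \<notin> X" by auto
      show "trv (mons u) X" unfolding trv_def
      proof
        fix q assume "q \<in> mons u"
        then have "{#y, y#} + q \<in> mons ?u'" by auto
        then have "size (filter_mset (\<lambda>x. x \<in> X) ({#y, y#} + q)) = 1" using tX unfolding trv_def by blast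
        then show "size (filter_mset (\<lambda>x. x \<in> X) q) = 1" using yX by simp
      qed
    qed
    have "holds UNIV add7 mul7 u ?u'"
      unfolding holds7_iff using eqDT[OF D T V7_valid] by blast
    then have "holds UNIV ad mu u ?u'" by (rule S7)
    then have "eval ad mu v u = mu (mu (v y) (v y)) (eval ad mu v u)" for v
      unfolding holds_def by simp
    then show ?thesis using X2 by metis
  qed
  show "in_V_Sc ad mu" unfolding in_V_Sc_def
  proof (intro allI impI)
    fix s t assume E: "\<forall>k\<ge>1. holds (Sc_carrier k) Sc_add (Sc_mul k) s t"
    have E': "\<forall>k\<ge>1. holds (Sc_carrier k) Sc_add (Sc_mul k) t s"
      using E unfolding holds_def by metis
    show "holds UNIV ad mu s t"
    proof (cases "good s")
      case True
      have gt: "good t" using good_transfer2[OF True E] .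
      have 1: "DM (mons t) = DM (mons s) \<and> (\<forall>X. trv (mons s) X \<longrightarrow> trv (mons t) X)"
        using good_transfer[OF True E] .
      have 2: "DM (mons s) = DM (mons t) \<and> (\<forall>X. trv (mons t) X \<longrightarrow> trv (mons s) X)"
        using good_transfer[OF gt E'] .
      have "holds UNIV add7 mul7 s t"
        unfolding holds7_iff using eqDT[of s t, OF _ _ V7_valid] 1 2 by blast
      then show ?thesis by (rule S7)
    next
      case False
      have "\<not> good t" using good_transfer2[OF _ E'] False by blast
      then obtain y' where y': "\<forall>v. eval ad mu v t = mu (v y') (v y')" using bad_eval by blast
      obtain y where y: "\<forall>v. eval ad mu v s = mu (v y) (v y)" using bad_eval False by blast
      show ?thesis unfolding holds_def using y y' K by metis
    qed
  qed
next
  assume V: "in_V_Sc ad mu"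
  have VV: "holds UNIV ad mu s t" if "\<forall>k\<ge>1. holds (Sc_carrier k) Sc_add (Sc_mul k) s t" for s t
    using V that unfolding in_V_Sc_def by blast
  show "in_N ad mu" unfolding in_N_def
  proof
    show "\<forall>s t. holds UNIV add7 mul7 s t \<longrightarrow> holds UNIV ad mu s t"
    proof (intro allI impI)
      fix s t assume h: "holds UNIV add7 mul7 s t"
      then have H: "\<forall>w. (\<forall>n. w n \<in> V7) \<longrightarrow> ev 1 w s = ev 1 w t" using holds7_iff by blast
      have "\<forall>k\<ge>1. holds (Sc_carrier k) Sc_add (Sc_mul k) s t"
        unfolding holds_def using eqDT[OF holds7_D_trv(1)[OF H] holds7_D_trv(2)[OF H] carrier_valid] by blast
      then show "holds UNIV ad mu s t" by (rule VV)
    qed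
    show "holds UNIV ad mu (Times (Times (Var 0) (Var 0)) (Var 1)) (Times (Var 0) (Var 0))"
    proof (rule VV, intro allI impI)
      fix k :: nat assume "k \<ge> 1"
      show "holds (Sc_carrier k) Sc_add (Sc_mul k) (Times (Times (Var 0) (Var 0)) (Var 1)) (Times (Var 0) (Var 0))"
        unfolding holds_def
      proof (intro allI impI)
        fix v :: "nat \<Rightarrow> nat multiset option" assume "\<forall>n. v n \<in> Sc_carrier k"
        then have sq: "Sc_mul k (v 0) (v 0) = None" using sq_none by blast
        have nn: "Sc_mul k None y = None" for y by (simp add: Sc_mul_def)
        show "eval Sc_add (Sc_mul k) v (Times (Times (Var 0) (Var 0)) (Var 1)) =
              eval Sc_add (Sc_mul k) v (Times (Var 0) (Var 0))"
          by (simp only: eval.simps sq nn)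
      qed
    qed
  qed
qed


end
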